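(* Fix $n\ge2$ and $1\le m\le n$. Consider the following game. Alice chooses $\epsilon_0>0$ and Bob chooses an $n\times n$ $(m,\epsilon_0)$-matrix $A_0$; then Alice chooses $\epsilon_1>0$ (knowing $A_0$) and Bob chooses an $n\times n$ $(m,\epsilon_1)$-matrix $A_1$; and so on inductively, producing $(A_s)_{s\ge0}$. Let $A_{r,s}=A_rA_{r+1}\cdots A_s$ for $r<s$. Alice wins if there exist $\bar\epsilon_r>0$ ($r\ge0$) such that for every $r\ge0$ and every $s>r$, $A_{r,s}$ is an $(m,\bar\epsilon_r)$-matrix, and $\bar\epsilon_r\to0$ as $r\to\infty$; otherwise Bob wins. Then Alice has a winning strategy.
   Context: For $\epsilon>0$ and $1\le m\le n$, an $n\times n$ nonnegative matrix $A=(a_{ij})$ with positive diagonal entries is an $(m,\epsilon)$-matrix if $a_{ij}/a_{jj}<\epsilon$ for all $j\le m$ and $i\ne j$. *)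

theory Defs
  imports Complex_Main
begin

(* n x n real matrices represented as functions nat => nat => real; only entries
   with indices in {0..<n} are meaningful (indices are 0-based, so the paper's
   columns j = 1..m become j = 0..<m). *)
type_synonym mat = "nat \<Rightarrow> nat \<Rightarrow> real"

definition mat_mult :: "nat \<Rightarrow> mat \<Rightarrow> mat \<Rightarrow> mat" where
  "mat_mult n A B = (\<lambda>i j. \<Sum>k<n. A i k * B k j)"

definition is_meps :: "nat \<Rightarrow> nat \<Rightarrow> real \<Rightarrow> mat \<Rightarrow> bool" where
  "is_meps n m eps A \<longleftrightarrow>
     (\<forall>i<n. \<forall>j<n. 0 \<le> A i j) \<and>
     (\<forall>j<n. 0 < A j j) \<and>
     (\<forall>j<m. \<forall>i<n. i \<noteq> j \<longrightarrow> A i j / A j j < eps)"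

fun prodm :: "nat \<Rightarrow> (nat \<Rightarrow> mat) \<Rightarrow> nat \<Rightarrow> nat \<Rightarrow> mat" where
  "prodm n A r 0 = A r"
| "prodm n A r (Suc s) =
     (if Suc s \<le> r then A r else mat_mult n (prodm n A r s) (A (Suc s)))"

definition alice_wins :: "nat \<Rightarrow> nat \<Rightarrow> (nat \<Rightarrow> mat) \<Rightarrow> bool" where
  "alice_wins n m A \<longleftrightarrow>
     (\<exists>eb :: nat \<Rightarrow> real. (\<forall>r. 0 < eb r) \<and>
        (\<forall>r s. r < s \<longrightarrow> is_meps n m (eb r) (prodm n A r s)) \<and>
        eb \<longlonglongrightarrow> 0)"

end

theory Submission
  imports Defs
begin

lemma prodm_cong:
  assumes "\<forall>t\<le>max r s. A t = B t"
  shows "prodm n A r s = prodm n B r s"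
  using assms
proof (induction s)
  case 0
  then show ?case by simp
next
  case (Suc s)
  then show ?case by (simp add: mat_mult_def)
qed

lemma prodm_refl: "prodm n A r r = A r"
  by (cases r) auto

lemma prodm_step: "r \<le> s \<Longrightarrow> prodm n A r (Suc s) = mat_mult n (prodm n A r s) (A (Suc s))"
  by simp

lemma is_meps_mono: "is_meps n m e A \<Longrightarrow> e \<le> e' \<Longrightarrow> is_meps n m e' A"
  unfolding is_meps_def by force

definition Mh :: "nat \<Rightarrow> mat list \<Rightarrow> real" where
  "Mh n h = (\<Sum>r<length h. \<Sum>i<n. \<Sum>j<n. \<Sum>k<n.
      \<bar>prodm n (\<lambda>t. h!t) r (length h - 1) i k / prodm n (\<lambda>t. h!t) r (length h - 1) j j\<bar>)"

definition strat :: "nat \<Rightarrow> mat list \<Rightarrow> real" where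
  "strat n h = (1/2)^length h / (1 + Mh n h)"

lemma Mh_nonneg: "0 \<le> Mh n h"
  unfolding Mh_def by (intro sum_nonneg) auto

lemma strat_pos: "0 < strat n h"
  unfolding strat_def using Mh_nonneg[of n h] by auto

lemma strat_le: "strat n h \<le> (1/2)^length h"
proof -
  have "(1/2::real)^length h / (1 + Mh n h) \<le> (1/2)^length h / 1"
    using Mh_nonneg[of n h] by (intro divide_left_mono) auto
  then show ?thesis unfolding strat_def by simp
qed

lemma Mh_bound:
  assumes "r < s + 1" "i < n" "j < n"
  shows "\<bar>(\<Sum>k<n. prodm n A r s i k) / prodm n A r s j j\<bar> \<le> Mh n (map A [0..<s+1])"
proof -
  let ?h = "map A [0..<s+1]"
  have pe: "prodm n (\<lambda>t. ?h!t) r s = prodm n A r s"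
    by (rule prodm_cong) (use assms in \<open>auto simp: nth_append\<close>)
  have "\<bar>(\<Sum>k<n. prodm n A r s i k) / prodm n A r s j j\<bar>
      = \<bar>\<Sum>k<n. prodm n A r s i k / prodm n A r s j j\<bar>"
    by (simp add: sum_divide_distrib)
  also have "\<dots> \<le> (\<Sum>k<n. \<bar>prodm n A r s i k / prodm n A r s j j\<bar>)"
    by (rule sum_abs)
  also have "\<dots> \<le> (\<Sum>j'<n. \<Sum>k<n. \<bar>prodm n A r s i k / prodm n A r s j' j'\<bar>)"
    using assms by (intro member_le_sum[where f="\<lambda>j'. \<Sum>k<n. \<bar>prodm n A r s i k / prodm n A r s j' j'\<bar>"]) (auto intro!: sum_nonneg)
  also have "\<dots> \<le> (\<Sum>i'<n. \<Sum>j'<n. \<Sum>k<n. \<bar>prodm n A r s i' k / prodm n A r s j' j'\<bar>)"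
    using assms by (intro member_le_sum[where f="\<lambda>i'. \<Sum>j'<n. \<Sum>k<n. \<bar>prodm n A r s i' k / prodm n A r s j' j'\<bar>"]) (auto intro!: sum_nonneg)
  also have "\<dots> \<le> (\<Sum>r'<s+1. \<Sum>i'<n. \<Sum>j'<n. \<Sum>k<n. \<bar>prodm n A r' s i' k / prodm n A r' s j' j'\<bar>)"
    using assms by (intro member_le_sum[where f="\<lambda>r'. \<Sum>i'<n. \<Sum>j'<n. \<Sum>k<n. \<bar>prodm n A r' s i' k / prodm n A r' s j' j'\<bar>"]) (auto intro!: sum_nonneg)
  also have "\<dots> = Mh n ?h"
  proof -
    have "\<And>r'. r' < s + 1 \<Longrightarrow> prodm n (\<lambda>t. ?h!t) r' s = prodm n A r' s"
      by (rule prodm_cong) (auto simp: nth_append)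
    then show ?thesis unfolding Mh_def by (intro sum.cong) auto
  qed
  finally show ?thesis .
qed

lemma step_ratio:
  fixes P B :: mat
  assumes Pn: "\<forall>i<n. \<forall>k<n. 0 \<le> P i k" and Bn: "\<forall>k<n. \<forall>j<n. 0 \<le> B k j"
    and Pj: "0 < P j j" and Bj: "0 < B j j" and j: "j < n" and i: "i < n" and ij: "i \<noteq> j"
    and Br: "\<forall>k<n. k \<noteq> j \<longrightarrow> B k j / B j j < e" and e: "0 < e"
    and d: "e * ((\<Sum>k<n. P i k) / P j j) \<le> d"
  shows "mat_mult n P B i j / mat_mult n P B j j \<le> P i j / P j j + d"
proof -
  let ?S = "\<Sum>k<n. P i k"
  have Bk: "B k j \<le> e * B j j" if "k < n" "k \<noteq> j" for k
    using Br that Bj by (auto simp: divide_less_eq less_imp_le)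
  have split: "mat_mult n P B i j = P i j * B j j + (\<Sum>k\<in>{..<n}-{j}. P i k * B k j)"
    unfolding mat_mult_def using j by (simp add: sum.remove)
  have "(\<Sum>k\<in>{..<n}-{j}. P i k * B k j) \<le> (\<Sum>k\<in>{..<n}-{j}. P i k * (e * B j j))"
    using Pn i Bk by (intro sum_mono mult_left_mono) auto
  also have "\<dots> \<le> (\<Sum>k<n. P i k * (e * B j j))"
    using Pn i e Bj by (intro sum_mono2) auto
  also have "\<dots> = e * B j j * ?S"
    by (simp add: sum_distrib_left sum_distrib_right mult_ac)
  finally have num: "mat_mult n P B i j \<le> B j j * (P i j + e * ?S)"
    using split by (simp add: algebra_simps)
  have den: "P j j * B j j \<le> mat_mult n P B j j"
    unfolding mat_mult_def using j Pn Bn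
    by (intro member_le_sum[where f="\<lambda>k. P j k * B k j"]) auto
  have dpos: "0 < P j j * B j j" using Pj Bj by simp
  have numnn: "0 \<le> mat_mult n P B i j"
    unfolding mat_mult_def using Pn Bn i j by (intro sum_nonneg) auto
  have "mat_mult n P B i j / mat_mult n P B j j \<le> mat_mult n P B i j / (P j j * B j j)"
    using den dpos numnn by (intro divide_left_mono) auto
  also have "\<dots> \<le> B j j * (P i j + e * ?S) / (P j j * B j j)"
    using num dpos by (intro divide_right_mono) auto
  also have "\<dots> = P i j / P j j + e * (?S / P j j)"
    using Pj Bj by (simp add: field_simps)
  also have "\<dots> \<le> P i j / P j j + d" using d by simp
  finally show ?thesis .
qed

lemma inv:
  assumes hyp: "\<forall>s. is_meps n m (strat n (map A [0..<s])) (A s)" and mn: "m \<le> n"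
  shows "is_meps n m (2*(1/2)^r - (1/2)^(r+d)) (prodm n A r (r+d))"
proof (induction d)
  case 0
  have "is_meps n m (strat n (map A [0..<r])) (A r)" using hyp by blast
  moreover have "strat n (map A [0..<r]) \<le> 2*(1/2)^r - (1/2)^(r+0)"
    using strat_le[of n "map A [0..<r]"] by simp
  ultimately show ?case by (simp add: prodm_refl is_meps_mono)
next
  case (Suc d)
  let ?s = "r + d"
  let ?P = "prodm n A r ?s"
  let ?B = "A (Suc ?s)"
  let ?e = "strat n (map A [0..<Suc ?s])"
  have IH: "is_meps n m (2*(1/2)^r - (1/2)^?s) ?P" using Suc by simp
  have HB: "is_meps n m ?e ?B" using hyp by blast
  have eq: "prodm n A r (r + Suc d) = mat_mult n ?P ?B" by simp
  have Pn: "\<forall>i<n. \<forall>k<n. 0 \<le> ?P i k" and Pd: "\<forall>j<n. 0 < ?P j j"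
    using IH unfolding is_meps_def by auto
  have Bn: "\<forall>k<n. \<forall>j<n. 0 \<le> ?B k j" and Bd: "\<forall>j<n. 0 < ?B j j"
    using HB unfolding is_meps_def by auto
  have epos: "0 < ?e" by (rule strat_pos)
  have nn: "\<forall>i<n. \<forall>j<n. 0 \<le> mat_mult n ?P ?B i j"
    unfolding mat_mult_def using Pn Bn by (auto intro!: sum_nonneg)
  have dd: "\<forall>j<n. 0 < mat_mult n ?P ?B j j"
  proof (intro allI impI)
    fix j assume j: "j < n"
    have "?P j j * ?B j j \<le> mat_mult n ?P ?B j j"
      unfolding mat_mult_def using j Pn Bn
      by (intro member_le_sum[where f="\<lambda>k. ?P j k * ?B k j"]) auto
    moreover have "0 < ?P j j * ?B j j" using Pd Bd j by simp
    ultimately show "0 < mat_mult n ?P ?B j j" by linarith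
  qed
  have rat: "mat_mult n ?P ?B i j / mat_mult n ?P ?B j j < 2*(1/2)^r - (1/2)^(r + Suc d)"
    if j: "j < m" and i: "i < n" and ij: "i \<noteq> j" for i j
  proof -
    have jn: "j < n" using j mn by simp
    let ?S = "\<Sum>k<n. ?P i k"
    have Snn: "0 \<le> ?S / ?P j j" using Pn Pd i jn by (intro divide_nonneg_pos sum_nonneg) auto
    have M: "?S / ?P j j \<le> Mh n (map A [0..<?s+1])"
      using Mh_bound[of r ?s i n j A] i jn abs_ge_self[of "?S / ?P j j"] by linarith
    have dbound: "?e * (?S / ?P j j) \<le> (1/2)^(Suc ?s)"
    proof -
      have "?e * (?S / ?P j j) = (1/2)^(Suc ?s) * ((?S / ?P j j) / (1 + Mh n (map A [0..<Suc ?s])))"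
        unfolding strat_def by simp
      also have "\<dots> \<le> (1/2)^(Suc ?s) * 1"
      proof (rule mult_left_mono)
        have X: "\<And>x y::real. x \<le> y \<Longrightarrow> 0 \<le> y \<Longrightarrow> x / (1 + y) \<le> 1"
          by (simp add: divide_le_eq_1)
        show "(?S / ?P j j) / (1 + Mh n (map A [0..<Suc ?s])) \<le> 1"
          by (rule X[OF _ Mh_nonneg]) (use M in simp)
      qed simp
      finally show ?thesis by simp
    qed
    have "mat_mult n ?P ?B i j / mat_mult n ?P ?B j j \<le> ?P i j / ?P j j + (1/2)^(Suc ?s)"
      apply (rule step_ratio[where e="?e"])
      using Pn Bn Pd Bd jn i ij epos dbound HB j unfolding is_meps_def by auto
    moreover have "?P i j / ?P j j < 2*(1/2)^r - (1/2)^?s"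
      using IH j i ij unfolding is_meps_def by auto
    ultimately show ?thesis by simp
  qed
  show ?case unfolding eq is_meps_def using nn dd rat by auto
qed

theorem theorem2p3:
  fixes n m :: nat
  assumes "2 \<le> n" and "1 \<le> m" and "m \<le> n"
  shows "\<exists>strat :: mat list \<Rightarrow> real.
           (\<forall>h. 0 < strat h) \<and>
           (\<forall>A :: nat \<Rightarrow> mat.
              (\<forall>s. is_meps n m (strat (map A [0..<s])) (A s)) \<longrightarrow> alice_wins n m A)"
proof (intro exI[where x="strat n"] conjI allI impI)
  fix h show "0 < strat n h" by (rule strat_pos)
next
  fix A :: "nat \<Rightarrow> mat"
  assume hyp: "\<forall>s. is_meps n m (strat n (map A [0..<s])) (A s)"
  show "alice_wins n m A"
    unfolding alice_wins_def
  proof (intro exI[where x="\<lambda>r. 2*(1/2::real)^r"] conjI allI impI)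
    fix r show "0 < 2*(1/2::real)^r" by simp
  next
    fix r s :: nat assume "r < s"
    then obtain d where sd: "s = r + d" by (metis less_imp_add_positive)
    have "is_meps n m (2*(1/2)^r - (1/2)^(r+d)) (prodm n A r (r+d))"
      using inv[OF hyp assms(3)] .
    then show "is_meps n m (2*(1/2)^r) (prodm n A r s)"
      unfolding sd by (rule is_meps_mono) simp
  next
    show "(\<lambda>r. 2*(1/2::real)^r) \<longlonglongrightarrow> 0"
      by (intro tendsto_mult_right_zero LIMSEQ_power_zero) simp
  qed
qed

end
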